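(* Let $mG^{(0)}$ be a finite canonical misinformation game and $\mathcal{T}$ the terminal set of the Adaptation Procedure on $mG^{(0)}$. Then: (i) $\mathcal{T}\subseteq\mathcal{AD}^\infty(\{mG^{(0)}\})$; (ii) for any $\sigma\in SME(mG^{(0)})$ there exists $mG\in\mathcal{T}$ such that $\sigma\in NME(mG)$.
   Context: A normal-form game is $G=\langle N,S,P\rangle$ with finite players $N$, finite pure strategy sets $S_i$, positions $S=\times_i S_i$, payoffs $P_i:S\to\mathbb{R}$. A misinformation game $mG=\langle G^0,G^1,\dots,G^{|N|}\rangle$ consists of the actual game $G^0$ and subjective games $G^i$; it is canonical if all $G^i=\langle N,S,P^i\rangle$ differ from $G^0$ only in payoffs and in every $G^i$ all players have equally many pure strategies. $NME(mG)$ is the set of profiles $\sigma=(\sigma_1,\dots,\sigma_{|N|})$ such that each $\sigma_i$ is player $i$'s component of some Nash equilibrium of $G^i$. $\chi(\sigma)=\mathrm{supp}(\sigma_1)\times\dots\times\mathrm{supp}(\sigma_{|N|})$. For $\vec v\in S$, $mG_{\vec v}$ is obtained by replacing, in every $P^i$ ($i\ge1$), the payoff vector at position $\vec v$ by $P^0(\vec v)$. For a set $M$ of misinformation games, $\mathcal{AD}(M)=\{mG_{\vec u}: mG\in M,\sigma\in NME(mG),\vec u\in\chi(\sigma)\}$, $\mathcal{AD}^{(0)}(M)=M$, $\mathcal{AD}^{(t+1)}(M)=\mathcal{AD}^{(t)}(\mathcal{AD}(M))$, $\mathcal{AD}^*(M)=\bigcup_{t\ge0}\mathcal{AD}^{(t)}(M)$;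 the length $\mathfrak{L}$ is the least $t\ge0$ with $\mathcal{AD}^{(t+1)}(M)=\mathcal{AD}^{(t)}(M)$ and $\mathcal{AD}^\infty(M)=\mathcal{AD}^{(\mathfrak{L})}(M)$. The terminal set is $\mathcal{T}=\{mG\in\mathcal{AD}^*(\{mG^{(0)}\}): mG\in\mathcal{AD}(\{mG\})\}$. A profile $\sigma$ is a stable misinformed equilibrium of $mG^{(0)}$ if there is $\widehat{mG}\in\mathcal{AD}^\infty(\{mG^{(0)}\})$ with $\sigma\in NME(\widehat{mG})$ and $\widehat{mG}_{\vec v}=\widehat{mG}$ for all $\vec v\in\chi(\sigma)$; $SME(mG^{(0)})$ is the set of these. *)

theory Defs
  imports "HOL-Analysis.Analysis"
begin

(* A canonical misinformation game with shared N and S is represented by its payoff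
   functions  mg :: nat => (nat => nat) => nat => real :  mg g s i  is the payoff of
   player i at position s in game G^g  (g = 0: actual game, g = i in 1..n: subjective
   game of player i). *)

type_synonym game = "(nat \<Rightarrow> nat) \<Rightarrow> nat \<Rightarrow> real"
type_synonym mgame = "nat \<Rightarrow> game"
type_synonym profile = "nat \<Rightarrow> nat \<Rightarrow> real"

definition positions :: "nat \<Rightarrow> (nat \<Rightarrow> nat) \<Rightarrow> (nat \<Rightarrow> nat) set" where
  "positions n ms = PiE {1..n} (\<lambda>i. {0..<ms i})"

definition mixed_strategy :: "(nat \<Rightarrow> nat) \<Rightarrow> nat \<Rightarrow> (nat \<Rightarrow> real) \<Rightarrow> bool" where
  "mixed_strategy ms i p \<longleftrightarrow> (\<forall>a. 0 \<le> p a) \<and> (\<forall>a. ms i \<le> a \<longrightarrow> p a = 0)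
      \<and> (\<Sum>a<ms i. p a) = 1"

definition mixed_profile :: "nat \<Rightarrow> (nat \<Rightarrow> nat) \<Rightarrow> profile \<Rightarrow> bool" where
  "mixed_profile n ms \<sigma> \<longleftrightarrow> (\<forall>i\<in>{1..n}. mixed_strategy ms i (\<sigma> i))
      \<and> (\<forall>i. i \<notin> {1..n} \<longrightarrow> \<sigma> i = (\<lambda>_. 0))"

definition exp_payoff :: "nat \<Rightarrow> (nat \<Rightarrow> nat) \<Rightarrow> game \<Rightarrow> profile \<Rightarrow> nat \<Rightarrow> real" where
  "exp_payoff n ms G \<sigma> i = (\<Sum>s\<in>positions n ms. (\<Prod>k\<in>{1..n}. \<sigma> k (s k)) * G s i)"

definition nash :: "nat \<Rightarrow> (nat \<Rightarrow> nat) \<Rightarrow> game \<Rightarrow> profile \<Rightarrow> bool" where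
  "nash n ms G \<sigma> \<longleftrightarrow> mixed_profile n ms \<sigma> \<and>
     (\<forall>i\<in>{1..n}. \<forall>\<tau>. mixed_strategy ms i \<tau> \<longrightarrow>
         exp_payoff n ms G (\<sigma>(i := \<tau>)) i \<le> exp_payoff n ms G \<sigma> i)"

definition NME :: "nat \<Rightarrow> (nat \<Rightarrow> nat) \<Rightarrow> mgame \<Rightarrow> profile set" where
  "NME n ms mg = {\<sigma>. mixed_profile n ms \<sigma> \<and>
      (\<forall>i\<in>{1..n}. \<exists>\<sigma>'. nash n ms (mg i) \<sigma>' \<and> \<sigma>' i = \<sigma> i)}"

definition chi :: "nat \<Rightarrow> profile \<Rightarrow> (nat \<Rightarrow> nat) set" where
  "chi n \<sigma> = PiE {1..n} (\<lambda>i. {a. 0 < \<sigma> i a})"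

definition adapt :: "nat \<Rightarrow> mgame \<Rightarrow> (nat \<Rightarrow> nat) \<Rightarrow> mgame" where
  "adapt n mg v = (\<lambda>g s i. if g \<in> {1..n} \<and> s = v \<and> i \<in> {1..n} then mg 0 v i else mg g s i)"

definition AD :: "nat \<Rightarrow> (nat \<Rightarrow> nat) \<Rightarrow> mgame set \<Rightarrow> mgame set" where
  "AD n ms M = {adapt n mg u | mg \<sigma> u. mg \<in> M \<and> \<sigma> \<in> NME n ms mg \<and> u \<in> chi n \<sigma>}"

definition AD_iter :: "nat \<Rightarrow> (nat \<Rightarrow> nat) \<Rightarrow> nat \<Rightarrow> mgame set \<Rightarrow> mgame set" where
  "AD_iter n ms t M = (AD n ms ^^ t) M"

definition AD_star :: "nat \<Rightarrow> (nat \<Rightarrow> nat) \<Rightarrow> mgame set \<Rightarrow> mgame set" where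
  "AD_star n ms M = (\<Union>t. AD_iter n ms t M)"

definition AD_length :: "nat \<Rightarrow> (nat \<Rightarrow> nat) \<Rightarrow> mgame set \<Rightarrow> nat" where
  "AD_length n ms M = (LEAST t. AD_iter n ms (Suc t) M = AD_iter n ms t M)"

definition AD_inf :: "nat \<Rightarrow> (nat \<Rightarrow> nat) \<Rightarrow> mgame set \<Rightarrow> mgame set" where
  "AD_inf n ms M = AD_iter n ms (AD_length n ms M) M"

definition terminal_set :: "nat \<Rightarrow> (nat \<Rightarrow> nat) \<Rightarrow> mgame \<Rightarrow> mgame set" where
  "terminal_set n ms mg0 = {mg \<in> AD_star n ms {mg0}. mg \<in> AD n ms {mg}}"

definition SME :: "nat \<Rightarrow> (nat \<Rightarrow> nat) \<Rightarrow> mgame \<Rightarrow> profile set" where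
  "SME n ms mg0 = {\<sigma>. \<exists>mgh \<in> AD_inf n ms {mg0}. \<sigma> \<in> NME n ms mgh \<and>
       (\<forall>v\<in>chi n \<sigma>. adapt n mgh v = mgh)}"

definition canonical :: "nat \<Rightarrow> (nat \<Rightarrow> nat) \<Rightarrow> bool" where
  "canonical n ms \<longleftrightarrow> 1 \<le> n \<and> (\<forall>i\<in>{1..n}. 1 \<le> ms i) \<and> (\<forall>i\<in>{1..n}. \<forall>j\<in>{1..n}. ms i = ms j)"

end

theory Submission
  imports Defs
begin

lemma AD_mono: "M \<subseteq> M' \<Longrightarrow> AD n ms M \<subseteq> AD n ms M'"
  unfolding AD_def by blast

lemma AD_Suc: "AD_iter n ms (Suc t) M = AD n ms (AD_iter n ms t M)"
  by (simp add: AD_iter_def)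

lemma chi_positions:
  assumes "\<sigma> \<in> NME n ms mg" "u \<in> chi n \<sigma>"
  shows "u \<in> positions n ms"
proof -
  have mp: "mixed_profile n ms \<sigma>" using assms(1) by (simp add: NME_def)
  have "\<And>i a. i \<in> {1..n} \<Longrightarrow> 0 < \<sigma> i a \<Longrightarrow> a < ms i"
  proof (rule ccontr)
    fix i a assume "i \<in> {1..n}" "0 < \<sigma> i a" "\<not> a < ms i"
    then show False using mp unfolding mixed_profile_def mixed_strategy_def
      by (metis less_irrefl not_less)
  qed
  then show ?thesis using assms(2) unfolding chi_def positions_def PiE_def Pi_def by auto
qed

definition dset :: "nat \<Rightarrow> (nat \<Rightarrow> nat) \<Rightarrow> mgame \<Rightarrow> (nat \<times> (nat \<Rightarrow> nat) \<times> nat) set" where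
  "dset n ms mg = {(g,s,i). g \<in> {1..n} \<and> s \<in> positions n ms \<and> i \<in> {1..n} \<and> mg g s i \<noteq> mg 0 s i}"

lemma finite_positions: "finite (positions n ms)"
  unfolding positions_def by (intro finite_PiE) auto

lemma finite_dset: "finite (dset n ms mg)"
proof -
  have "dset n ms mg \<subseteq> {1..n} \<times> positions n ms \<times> {1..n}"
    unfolding dset_def by auto
  then show ?thesis using finite_positions by (meson finite_SigmaI finite_atLeastAtMost finite_subset)
qed

lemma adapt0: "adapt n mg u 0 = mg 0"
  unfolding adapt_def by (rule ext)+ simp

lemma dset_adapt:
  assumes "u \<in> positions n ms" "adapt n mg u \<noteq> mg"
  shows "dset n ms (adapt n mg u) \<subset> dset n ms mg"
proof
  show sub: "dset n ms (adapt n mg u) \<subseteq> dset n ms mg"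
    unfolding dset_def adapt0 by (auto simp: adapt_def split: if_splits)
  obtain g s i where d: "adapt n mg u g s i \<noteq> mg g s i" using assms(2) by (meson ext)
  then have h: "g \<in> {1..n}" "s = u" "i \<in> {1..n}" by (auto simp: adapt_def split: if_splits)
  then have "mg g u i \<noteq> mg 0 u i" using d by (simp add: adapt_def)
  then have "(g,u,i) \<in> dset n ms mg" using h assms(1) by (simp add: dset_def)
  moreover have "(g,u,i) \<notin> dset n ms (adapt n mg u)"
    using h unfolding dset_def adapt0 by (simp add: adapt_def)
  ultimately show "dset n ms (adapt n mg u) \<noteq> dset n ms mg" by blast
qed

primrec Qs :: "nat \<Rightarrow> (nat \<Rightarrow> nat) \<Rightarrow> mgame \<Rightarrow> nat \<Rightarrow> mgame set" where
  "Qs n ms mg0 0 = {}"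
| "Qs n ms mg0 (Suc t) = AD n ms (Qs n ms mg0 t) \<union>
      {mg \<in> AD_iter n ms t {mg0}. mg \<in> AD n ms {mg}}"

lemma Qs_sub: "Qs n ms mg0 t \<subseteq> AD_iter n ms t {mg0}"
proof (induction t)
  case 0 then show ?case by simp
next
  case (Suc t)
  have "AD n ms (Qs n ms mg0 t) \<subseteq> AD_iter n ms (Suc t) {mg0}"
    using AD_mono[OF Suc] by (simp add: AD_Suc)
  moreover have "{mg \<in> AD_iter n ms t {mg0}. mg \<in> AD n ms {mg}} \<subseteq> AD_iter n ms (Suc t) {mg0}"
  proof
    fix mg assume "mg \<in> {mg \<in> AD_iter n ms t {mg0}. mg \<in> AD n ms {mg}}"
    then have "mg \<in> AD_iter n ms t {mg0}" "mg \<in> AD n ms {mg}" by auto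
    then show "mg \<in> AD_iter n ms (Suc t) {mg0}"
      using AD_mono[of "{mg}" "AD_iter n ms t {mg0}" n ms] by (auto simp: AD_Suc)
  qed
  ultimately show ?case by simp
qed

lemma Qs_mono: "Qs n ms mg0 t \<subseteq> Qs n ms mg0 (Suc t)"
proof (induction t)
  case 0 then show ?case by simp
next
  case (Suc t)
  have "AD n ms (Qs n ms mg0 t) \<subseteq> AD n ms (Qs n ms mg0 (Suc t))"
    using AD_mono[OF Suc] .
  moreover have "{mg \<in> AD_iter n ms t {mg0}. mg \<in> AD n ms {mg}} \<subseteq> AD n ms (Qs n ms mg0 (Suc t))"
  proof
    fix mg assume a: "mg \<in> {mg \<in> AD_iter n ms t {mg0}. mg \<in> AD n ms {mg}}"
    then have "mg \<in> Qs n ms mg0 (Suc t)" by simp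
    then show "mg \<in> AD n ms (Qs n ms mg0 (Suc t))"
      using a AD_mono[of "{mg}" "Qs n ms mg0 (Suc t)" n ms] by auto
  qed
  ultimately show ?case by auto
qed

lemma Qs_mono': "t \<le> t' \<Longrightarrow> Qs n ms mg0 t \<subseteq> Qs n ms mg0 t'"
  by (induction t' rule: dec_induct) (use Qs_mono in blast)+

lemma notQ_card:
  "mg \<in> AD_iter n ms t {mg0} \<Longrightarrow> mg \<notin> Qs n ms mg0 t \<Longrightarrow>
   card (dset n ms mg) + t \<le> card (dset n ms mg0)"
proof (induction t arbitrary: mg)
  case 0 then show ?case by (simp add: AD_iter_def)
next
  case (Suc t)
  from Suc.prems(1) obtain h \<sigma> u where h: "h \<in> AD_iter n ms t {mg0}" "\<sigma> \<in> NME n ms h"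
    "u \<in> chi n \<sigma>" "mg = adapt n h u"
    by (auto simp: AD_Suc AD_def)
  have hQ: "h \<notin> Qs n ms mg0 t"
  proof
    assume "h \<in> Qs n ms mg0 t"
    then have "mg \<in> AD n ms (Qs n ms mg0 t)" using h unfolding AD_def by blast
    then show False using Suc.prems(2) by simp
  qed
  have "mg \<noteq> h"
  proof
    assume "mg = h"
    then have "h \<in> AD n ms {h}" using h unfolding AD_def by blast
    then show False using Suc.prems(2) h(1) \<open>mg = h\<close> by simp
  qed
  then have "dset n ms mg \<subset> dset n ms h"
    using dset_adapt[OF chi_positions[OF h(2,3)]] h(4) by simp
  then have "card (dset n ms mg) < card (dset n ms h)"
    using finite_dset by (meson psubset_card_mono)
  then show ?case using Suc.IH[OF h(1) hQ] by simp
qed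

definition aset :: "nat \<Rightarrow> mgame \<Rightarrow> (nat \<Rightarrow> nat) set \<Rightarrow> mgame" where
  "aset n mg A = (\<lambda>g s i. if g \<in> {1..n} \<and> s \<in> A \<and> i \<in> {1..n} then mg 0 s i else mg g s i)"

lemma S_aset: "mg \<in> AD_iter n ms t {mg0} \<Longrightarrow> \<exists>A \<subseteq> positions n ms. mg = aset n mg0 A"
proof (induction t arbitrary: mg)
  case 0
  then have "mg = aset n mg0 {}" by (simp add: AD_iter_def aset_def)
  then show ?case by blast
next
  case (Suc t)
  from Suc.prems obtain h \<sigma> u where h: "h \<in> AD_iter n ms t {mg0}" "\<sigma> \<in> NME n ms h"
    "u \<in> chi n \<sigma>" "mg = adapt n h u"
    by (auto simp: AD_Suc AD_def)
  from Suc.IH[OF h(1)] obtain A where A: "A \<subseteq> positions n ms" "h = aset n mg0 A" by blast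
  have "mg = aset n mg0 (insert u A)"
    unfolding h(4) A(2) by (rule ext)+ (auto simp: adapt_def aset_def)
  moreover have "insert u A \<subseteq> positions n ms" using A chi_positions[OF h(2,3)] by simp
  ultimately show ?case by blast
qed

lemma S_fin: "AD_iter n ms t {mg0} \<subseteq> aset n mg0 ` Pow (positions n ms)"
  using S_aset by blast

lemma exists_fix: "\<exists>t. AD_iter n ms (Suc t) {mg0} = AD_iter n ms t {mg0}"
proof -
  define D where "D = Suc (card (dset n ms mg0))"
  define F where "F = aset n mg0 ` Pow (positions n ms)"
  have finF: "finite F" unfolding F_def using finite_positions by simp
  have SQ: "AD_iter n ms t {mg0} = Qs n ms mg0 t" if "D \<le> t" for t
  proof
    show "AD_iter n ms t {mg0} \<subseteq> Qs n ms mg0 t"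
    proof
      fix mg assume "mg \<in> AD_iter n ms t {mg0}"
      then show "mg \<in> Qs n ms mg0 t" using notQ_card[of mg n ms t mg0] that unfolding D_def by fastforce
    qed
  qed (rule Qs_sub)
  have "\<exists>t\<ge>D. Qs n ms mg0 (Suc t) = Qs n ms mg0 t"
  proof (rule ccontr)
    assume "\<not> ?thesis"
    then have ps: "Qs n ms mg0 t \<subset> Qs n ms mg0 (Suc t)" if "D \<le> t" for t
      using Qs_mono that by blast
    have QF: "Qs n ms mg0 t \<subseteq> F" for t using Qs_sub S_fin unfolding F_def by blast
    have "k \<le> card (Qs n ms mg0 (D + k))" for k
    proof (induction k)
      case 0 then show ?case by simp
    next
      case (Suc k)
      have "card (Qs n ms mg0 (D + k)) < card (Qs n ms mg0 (Suc (D + k)))"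
        using ps[of "D+k"] QF finF by (meson le_add1 psubset_card_mono rev_finite_subset)
      then show ?case using Suc by simp
    qed
    from this[of "Suc (card F)"] have "Suc (card F) \<le> card F"
      using QF finF card_mono by (meson le_trans)
    then show False by simp
  qed
  then obtain t where "t \<ge> D" "Qs n ms mg0 (Suc t) = Qs n ms mg0 t" by blast
  then show ?thesis using SQ[of t] SQ[of "Suc t"] by auto
qed

lemma AD_inf_eq:
  assumes "AD_length n ms {mg0} \<le> t"
  shows "AD_iter n ms t {mg0} = AD_inf n ms {mg0}"
  using assms
proof (induction t rule: dec_induct)
  case base then show ?case by (simp add: AD_inf_def)
next
  case (step t)
  have L: "AD_iter n ms (Suc (AD_length n ms {mg0})) {mg0} = AD_iter n ms (AD_length n ms {mg0}) {mg0}"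
    unfolding AD_length_def using exists_fix by (rule LeastI_ex)
  show ?case using step L by (simp add: AD_Suc AD_inf_def)
qed

theorem proposition11:
  fixes n :: nat and ms :: "nat \<Rightarrow> nat" and mg0 :: mgame
  assumes "canonical n ms"
  shows "terminal_set n ms mg0 \<subseteq> AD_inf n ms {mg0} \<and>
         (\<forall>\<sigma>\<in>SME n ms mg0. \<exists>mg\<in>terminal_set n ms mg0. \<sigma> \<in> NME n ms mg)"
proof
  show "terminal_set n ms mg0 \<subseteq> AD_inf n ms {mg0}"
  proof
    fix mg assume "mg \<in> terminal_set n ms mg0"
    then obtain t where t: "mg \<in> AD_iter n ms t {mg0}" and l: "mg \<in> AD n ms {mg}"
      by (auto simp: terminal_set_def AD_star_def)
    have k: "mg \<in> AD_iter n ms (t + k) {mg0}" for k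
    proof (induction k)
      case 0 then show ?case using t by simp
    next
      case (Suc k)
      then show ?case using l AD_mono[of "{mg}" "AD_iter n ms (t + k) {mg0}" n ms]
        by (auto simp: AD_Suc)
    qed
    show "mg \<in> AD_inf n ms {mg0}"
      using k[of "AD_length n ms {mg0}"] AD_inf_eq[of n ms mg0 "t + AD_length n ms {mg0}"] by simp
  qed
next
  show "\<forall>\<sigma>\<in>SME n ms mg0. \<exists>mg\<in>terminal_set n ms mg0. \<sigma> \<in> NME n ms mg"
  proof
    fix \<sigma> assume "\<sigma> \<in> SME n ms mg0"
    then obtain mgh where m: "mgh \<in> AD_inf n ms {mg0}" "\<sigma> \<in> NME n ms mgh"
      "\<forall>v\<in>chi n \<sigma>. adapt n mgh v = mgh" by (auto simp: SME_def)
    have mp: "mixed_profile n ms \<sigma>" using m(2) by (simp add: NME_def)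
    have "\<exists>a. 0 < \<sigma> i a" if "i \<in> {1..n}" for i
    proof (rule ccontr)
      assume "\<nexists>a. 0 < \<sigma> i a"
      then have z: "\<forall>a. \<sigma> i a \<le> 0" by (simp add: not_less)
      have st: "mixed_strategy ms i (\<sigma> i)" using mp that unfolding mixed_profile_def by blast
      then have nn: "\<forall>a. 0 \<le> \<sigma> i a" and s1: "sum (\<sigma> i) {..<ms i} = 1"
        unfolding mixed_strategy_def by auto
      have "\<forall>a. \<sigma> i a = 0" using z nn by (meson order_antisym)
      then have "sum (\<sigma> i) {..<ms i} = 0" by (simp add: sum.neutral)
      then show False using s1 by linarith
    qed
    then have "\<forall>i\<in>{1..n}. {a. 0 < \<sigma> i a} \<noteq> {}" by blast
    then have "chi n \<sigma> \<noteq> {}" unfolding chi_def PiE_eq_empty_iff by blast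
    then obtain u where u: "u \<in> chi n \<sigma>" by blast
    have "mgh \<in> AD n ms {mgh}" using m(2,3) u unfolding AD_def
      by (metis (mono_tags, lifting) mem_Collect_eq singletonI)
    moreover have "mgh \<in> AD_star n ms {mg0}" using m(1) unfolding AD_star_def AD_inf_def by blast
    ultimately show "\<exists>mg\<in>terminal_set n ms mg0. \<sigma> \<in> NME n ms mg"
      using m(2) unfolding terminal_set_def by blast
  qed
qed

end
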